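(* Let $X,Y$ be metrizable vector spaces over $K$ with metrics $d_X,d_Y$. If $Y$ is complete, then $[B_d(X,Y),d]$ is a complete metric space.
   Context: $K$ is $\mathbb{R}$ or $\mathbb{C}$. For maps $F_1,F_2:X\to Y$, $d(F_1,F_2)=\max\left\{\sup_{x\neq0,x\in X}\frac{d_Y[F_1(x),F_2(x)]}{d_X(x,0)},\ d_Y[F_1(0),F_2(0)]\right\}\in[0,\infty]$, and $B_d(X,Y)$ is the set of maps $F:X\to Y$ with $d(F,0)<\infty$; $d$ is a metric on $B_d(X,Y)$. *)

theory Defs
  imports "HOL-Analysis.Analysis"
begin

definition metric_tvs :: "('a::real_vector \<Rightarrow> 'a \<Rightarrow> real) \<Rightarrow> bool" where
  "metric_tvs dX \<longleftrightarrow>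
     Metric_space UNIV dX \<and>
     continuous_map (prod_topology (Metric_space.mtopology UNIV dX) (Metric_space.mtopology UNIV dX))
        (Metric_space.mtopology UNIV dX) (\<lambda>(x, y). x + y) \<and>
     continuous_map (prod_topology euclideanreal (Metric_space.mtopology UNIV dX))
        (Metric_space.mtopology UNIV dX) (\<lambda>(a, x). a *\<^sub>R x)"

definition map_dist ::
  "('a::real_vector \<Rightarrow> 'a \<Rightarrow> real) \<Rightarrow> ('b::real_vector \<Rightarrow> 'b \<Rightarrow> real)
    \<Rightarrow> ('a \<Rightarrow> 'b) \<Rightarrow> ('a \<Rightarrow> 'b) \<Rightarrow> ereal" where
  "map_dist dX dY F1 F2 =
     max (SUP x\<in>{x. x \<noteq> 0}. ereal (dY (F1 x) (F2 x) / dX x 0)) (ereal (dY (F1 0) (F2 0)))"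

definition Bd :: "('a::real_vector \<Rightarrow> 'a \<Rightarrow> real) \<Rightarrow> ('b::real_vector \<Rightarrow> 'b \<Rightarrow> real)
    \<Rightarrow> ('a \<Rightarrow> 'b) set" where
  "Bd dX dY = {F. map_dist dX dY F (\<lambda>_. 0) < \<infinity>}"

definition Bd_dist :: "('a::real_vector \<Rightarrow> 'a \<Rightarrow> real) \<Rightarrow> ('b::real_vector \<Rightarrow> 'b \<Rightarrow> real)
    \<Rightarrow> ('a \<Rightarrow> 'b) \<Rightarrow> ('a \<Rightarrow> 'b) \<Rightarrow> real" where
  "Bd_dist dX dY F1 F2 = real_of_ereal (map_dist dX dY F1 F2)"

end

theory Submission
  imports Defs
begin

definition wgt :: "('a::real_vector \<Rightarrow> 'a \<Rightarrow> real) \<Rightarrow> 'a \<Rightarrow> real" where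
  "wgt dX x = (if x = 0 then 1 else dX x 0)"

lemma wgt_pos: assumes M: "Metric_space UNIV dX" shows "wgt dX x > 0"
  using Metric_space.nonneg[OF M, of x 0] Metric_space.zero[OF M, of x 0]
  by (auto simp: wgt_def)

lemma md_SUP: "map_dist dX dY F G = (SUP x. ereal (dY (F x) (G x) / wgt dX x))"
proof -
  define f where "f x = ereal (dY (F x) (G x) / wgt dX x)" for x
  have U: "(UNIV::'a set) = insert 0 {x. x \<noteq> 0}" by auto
  have "(SUP x. f x) = sup (f 0) (SUP x\<in>{x. x \<noteq> 0}. f x)"
    unfolding U by (rule SUP_insert)
  also have "(SUP x\<in>{x. x \<noteq> 0}. f x) = (SUP x\<in>{x. x \<noteq> 0}. ereal (dY (F x) (G x) / dX x 0))"
    by (rule SUP_cong) (auto simp: f_def wgt_def)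
  also have "f 0 = ereal (dY (F 0) (G 0))" by (simp add: f_def wgt_def)
  finally show ?thesis unfolding map_dist_def f_def by (simp add: sup_max max.commute)
qed

lemma md_le:
  assumes "Metric_space UNIV dX"
  shows "map_dist dX dY F G \<le> ereal c \<longleftrightarrow> (\<forall>x. dY (F x) (G x) \<le> c * wgt dX x)"
  unfolding md_SUP SUP_le_iff ereal_less_eq
  using wgt_pos[OF assms] by (simp add: pos_divide_le_eq)

lemma md_ge:
  assumes "Metric_space UNIV dX" "map_dist dX dY F G = ereal c"
  shows "dY (F x) (G x) \<le> c * wgt dX x"
  using md_le[OF assms(1), of dY F G c] assms(2) by simp

lemma md_nonneg:
  assumes "Metric_space UNIV dY"
  shows "0 \<le> map_dist dX dY F G"
proof -
  have "ereal 0 \<le> ereal (dY (F 0) (G 0))" using Metric_space.nonneg[OF assms] by simp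
  then show ?thesis unfolding map_dist_def by (simp add: le_max_iff_disj)
qed

lemma md_sym:
  assumes "Metric_space UNIV dY"
  shows "map_dist dX dY F G = map_dist dX dY G F"
proof -
  have "\<And>x. dY (F x) (G x) = dY (G x) (F x)" using Metric_space.commute[OF assms] by blast
  then show ?thesis unfolding map_dist_def by simp
qed

lemma md_tri:
  assumes "Metric_space UNIV dX" "Metric_space UNIV dY"
    "map_dist dX dY F G \<le> ereal a" "map_dist dX dY G H \<le> ereal b"
  shows "map_dist dX dY F H \<le> ereal (a + b)"
proof -
  have "dY (F x) (H x) \<le> (a + b) * wgt dX x" for x
  proof -
    have "dY (F x) (H x) \<le> dY (F x) (G x) + dY (G x) (H x)"
      using Metric_space.triangle[OF assms(2)] by simp
    also have "\<dots> \<le> a * wgt dX x + b * wgt dX x"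
      using assms(3,4) md_le[OF assms(1)] by (meson add_mono)
    finally show ?thesis by (simp add: distrib_right)
  qed
  then show ?thesis using md_le[OF assms(1)] by blast
qed

lemma md_refl:
  assumes "Metric_space UNIV dX" "Metric_space UNIV dY"
  shows "map_dist dX dY F F \<le> ereal 0"
proof -
  have "\<And>y. dY y y = 0" using Metric_space.zero[OF assms(2)] by simp
  then show ?thesis unfolding md_le[OF assms(1)] by simp
qed

lemma md_fin:
  assumes "Metric_space UNIV dX" "Metric_space UNIV dY"
    "F \<in> Bd dX dY" "G \<in> Bd dX dY"
  shows "map_dist dX dY F G = ereal (Bd_dist dX dY F G)"
proof -
  have fin: "\<exists>a. map_dist dX dY H (\<lambda>_. 0) = ereal a" if "H \<in> Bd dX dY" for H
  proof -
    have "0 \<le> map_dist dX dY H (\<lambda>_. 0)" "map_dist dX dY H (\<lambda>_. 0) < \<infinity>"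
      using md_nonneg[OF assms(2)] that by (auto simp: Bd_def)
    then show ?thesis by (cases "map_dist dX dY H (\<lambda>_. 0)") auto
  qed
  obtain a b where a: "map_dist dX dY F (\<lambda>_. 0) = ereal a"
    and b: "map_dist dX dY G (\<lambda>_. 0) = ereal b" using fin assms(3,4) by blast
  have b': "map_dist dX dY (\<lambda>_. 0) G \<le> ereal b" using b md_sym[OF assms(2), of dX "\<lambda>_. 0" G] by simp
  have "map_dist dX dY F G \<le> ereal (a + b)"
    using md_tri[OF assms(1,2), of F "\<lambda>_. 0" a G b] a b' by simp
  moreover have "0 \<le> map_dist dX dY F G" using md_nonneg[OF assms(2)] .
  ultimately show ?thesis unfolding Bd_dist_def
    by (cases "map_dist dX dY F G") auto
qed

theorem corollary10:
  fixes dX :: "'a::real_vector \<Rightarrow> 'a \<Rightarrow> real" and dY :: "'b::real_vector \<Rightarrow> 'b \<Rightarrow> real"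
  assumes "metric_tvs dX" and "metric_tvs dY"
    and "Metric_space.mcomplete UNIV dY"
  shows "Metric_space (Bd dX dY) (Bd_dist dX dY) \<and>
         Metric_space.mcomplete (Bd dX dY) (Bd_dist dX dY)"
proof -
  have MX: "Metric_space UNIV dX" and MY: "Metric_space UNIV dY"
    using assms(1,2) by (auto simp: metric_tvs_def)
  have MB: "Metric_space (Bd dX dY) (Bd_dist dX dY)"
  proof
    fix F G :: "'a \<Rightarrow> 'b"
    show "0 \<le> Bd_dist dX dY F G"
      unfolding Bd_dist_def using md_nonneg[OF MY, of dX F G] by (rule real_of_ereal_pos)
    show "Bd_dist dX dY F G = Bd_dist dX dY G F"
      unfolding Bd_dist_def using md_sym[OF MY, of dX F G] by simp
  next
    fix F G :: "'a \<Rightarrow> 'b"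
    assume F: "F \<in> Bd dX dY" and G: "G \<in> Bd dX dY"
    show "Bd_dist dX dY F G = 0 \<longleftrightarrow> F = G"
    proof
      assume "Bd_dist dX dY F G = 0"
      then have "map_dist dX dY F G = ereal 0" using md_fin[OF MX MY F G] by simp
      then have "dY (F x) (G x) \<le> 0" for x using md_ge[OF MX] by fastforce
      then have "F x = G x" for x using Metric_space.nonneg[OF MY] Metric_space.zero[OF MY]
        by (metis UNIV_I order_antisym)
      then show "F = G" by auto
    next
      assume "F = G"
      have "map_dist dX dY F F \<le> ereal 0"
        by (rule md_refl[OF MX MY])
      then have "map_dist dX dY F F = ereal 0" using md_nonneg[OF MY] by (metis antisym zero_ereal_def)
      then show "Bd_dist dX dY F G = 0" using \<open>F = G\<close> by (simp add: Bd_dist_def)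
    qed
  next
    fix F G H :: "'a \<Rightarrow> 'b"
    assume F: "F \<in> Bd dX dY" and G: "G \<in> Bd dX dY" and H: "H \<in> Bd dX dY"
    have "map_dist dX dY F H \<le> ereal (Bd_dist dX dY F G + Bd_dist dX dY G H)"
      using md_tri[OF MX MY, of F G "Bd_dist dX dY F G" H "Bd_dist dX dY G H"]
        md_fin[OF MX MY F G] md_fin[OF MX MY G H] by simp
    then show "Bd_dist dX dY F H \<le> Bd_dist dX dY F G + Bd_dist dX dY G H"
      using md_fin[OF MX MY F H] by simp
  qed
  have "Metric_space.mcomplete (Bd dX dY) (Bd_dist dX dY)"
    unfolding Metric_space.mcomplete_def[OF MB]
  proof (intro allI impI)
    fix \<sigma> :: "nat \<Rightarrow> 'a \<Rightarrow> 'b"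
    assume C: "Metric_space.MCauchy (Bd dX dY) (Bd_dist dX dY) \<sigma>"
    have rng: "\<sigma> n \<in> Bd dX dY" for n using C unfolding Metric_space.MCauchy_def[OF MB] by auto
    have cau: "\<exists>N. \<forall>n m. N \<le> n \<longrightarrow> N \<le> m \<longrightarrow> Bd_dist dX dY (\<sigma> n) (\<sigma> m) < e" if "e > 0" for e
      using C that unfolding Metric_space.MCauchy_def[OF MB] by auto
    have pt: "dY (\<sigma> n x) (\<sigma> m x) \<le> Bd_dist dX dY (\<sigma> n) (\<sigma> m) * wgt dX x" for n m x
      using md_ge[OF MX md_fin[OF MX MY rng rng]] .
    have ex: "\<exists>y. limitin (Metric_space.mtopology UNIV dY) (\<lambda>n. \<sigma> n x) y sequentially" for x
    proof -
      have "Metric_space.MCauchy UNIV dY (\<lambda>n. \<sigma> n x)"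
        unfolding Metric_space.MCauchy_def[OF MY]
      proof (intro conjI allI impI)
        fix e :: real assume e: "e > 0"
        have wp: "wgt dX x > 0" by (rule wgt_pos[OF MX])
        obtain N where N: "\<And>n m. N \<le> n \<Longrightarrow> N \<le> m \<Longrightarrow> Bd_dist dX dY (\<sigma> n) (\<sigma> m) < e / wgt dX x"
          using cau[of "e / wgt dX x"] e wp by auto
        show "\<exists>N. \<forall>n n'. N \<le> n \<longrightarrow> N \<le> n' \<longrightarrow> dY (\<sigma> n x) (\<sigma> n' x) < e"
        proof (intro exI allI impI)
          fix n m assume "N \<le> n" "N \<le> m"
          have "dY (\<sigma> n x) (\<sigma> m x) \<le> Bd_dist dX dY (\<sigma> n) (\<sigma> m) * wgt dX x" by (rule pt)
          also have "\<dots> < e / wgt dX x * wgt dX x"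
            using N[OF \<open>N \<le> n\<close> \<open>N \<le> m\<close>] wp by (simp add: pos_less_divide_eq)
          also have "\<dots> = e" using wp by simp
          finally show "dY (\<sigma> n x) (\<sigma> m x) < e" .
        qed
      qed simp
      then show ?thesis using assms(3) unfolding Metric_space.mcomplete_def[OF MY] by blast
    qed
    have "\<forall>x. \<exists>y. limitin (Metric_space.mtopology UNIV dY) (\<lambda>n. \<sigma> n x) y sequentially"
      using ex by blast
    from choice[OF this] obtain f where
      f0: "\<forall>x. limitin (Metric_space.mtopology UNIV dY) (\<lambda>n. \<sigma> n x) (f x) sequentially"
      by blast
    have f: "limitin (Metric_space.mtopology UNIV dY) (\<lambda>n. \<sigma> n x) (f x) sequentially" for x
      using f0 by blast
    have fl: "\<exists>M. \<forall>m\<ge>M. dY (\<sigma> m x) (f x) < e" if "e > 0" for x e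
      using f[of x] that unfolding Metric_space.limitin_metric[OF MY] eventually_sequentially by auto
    have key: "map_dist dX dY (\<sigma> n) f \<le> ereal e"
      if N: "\<forall>n m. N \<le> n \<longrightarrow> N \<le> m \<longrightarrow> Bd_dist dX dY (\<sigma> n) (\<sigma> m) < e" and "N \<le> n" for e N n
    proof -
      have "dY (\<sigma> n x) (f x) \<le> e * wgt dX x" for x
      proof (rule field_le_epsilon)
        fix d :: real assume d: "d > 0"
        obtain M where M: "\<forall>m\<ge>M. dY (\<sigma> m x) (f x) < d" using fl[OF d, of x] by auto
        define m where "m = max M N"
        have t: "dY (\<sigma> n x) (f x) \<le> dY (\<sigma> n x) (\<sigma> m x) + dY (\<sigma> m x) (f x)"
          using Metric_space.triangle[OF MY] by simp
        have "Bd_dist dX dY (\<sigma> n) (\<sigma> m) < e" using N \<open>N \<le> n\<close> m_def by simp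
        then have "Bd_dist dX dY (\<sigma> n) (\<sigma> m) * wgt dX x \<le> e * wgt dX x"
          using wgt_pos[OF MX, of x] by (simp add: mult_right_mono)
        then have a: "dY (\<sigma> n x) (\<sigma> m x) \<le> e * wgt dX x" using pt[where n=n and m=m and x=x] by linarith
        have b: "dY (\<sigma> m x) (f x) < d" using M m_def by simp
        show "dY (\<sigma> n x) (f x) \<le> e * wgt dX x + d" using t a b by linarith
      qed
      then show ?thesis using md_le[OF MX] by blast
    qed
    have Z: "(\<lambda>_. 0) \<in> Bd dX dY"
      using md_refl[OF MX MY, of "\<lambda>_. 0"] by (auto simp: Bd_def intro: le_less_trans)
    obtain N where N: "\<forall>n m. N \<le> n \<longrightarrow> N \<le> m \<longrightarrow> Bd_dist dX dY (\<sigma> n) (\<sigma> m) < 1"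
      using cau[of 1] by auto
    have "map_dist dX dY f (\<sigma> N) \<le> ereal 1"
      using key[OF N, of N] md_sym[OF MY, of dX f "\<sigma> N"] by simp
    moreover have "map_dist dX dY (\<sigma> N) (\<lambda>_. 0) \<le> ereal (Bd_dist dX dY (\<sigma> N) (\<lambda>_. 0))"
      using md_fin[OF MX MY rng Z, of N] by simp
    ultimately have "map_dist dX dY f (\<lambda>_. 0) \<le> ereal (1 + Bd_dist dX dY (\<sigma> N) (\<lambda>_. 0))"
      by (rule md_tri[OF MX MY])
    then have fB: "f \<in> Bd dX dY" unfolding Bd_def by (auto intro: le_less_trans)
    show "\<exists>g. limitin (Metric_space.mtopology (Bd dX dY) (Bd_dist dX dY)) \<sigma> g sequentially"
    proof (intro exI)
      show "limitin (Metric_space.mtopology (Bd dX dY) (Bd_dist dX dY)) \<sigma> f sequentially"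
        unfolding Metric_space.limitin_metric[OF MB] eventually_sequentially
      proof (intro conjI fB allI impI)
        fix e :: real assume e: "e > 0"
        obtain N where N: "\<forall>n m. N \<le> n \<longrightarrow> N \<le> m \<longrightarrow> Bd_dist dX dY (\<sigma> n) (\<sigma> m) < e / 2"
          using cau[of "e / 2"] e by auto
        show "\<exists>N. \<forall>n\<ge>N. \<sigma> n \<in> Bd dX dY \<and> Bd_dist dX dY (\<sigma> n) f < e"
        proof (intro exI allI impI conjI)
          fix n assume "N \<le> n"
          show "\<sigma> n \<in> Bd dX dY" by (rule rng)
          have "ereal (Bd_dist dX dY (\<sigma> n) f) \<le> ereal (e / 2)"
            using key[OF N \<open>N \<le> n\<close>] md_fin[OF MX MY rng fB, of n] by simp
          then show "Bd_dist dX dY (\<sigma> n) f < e" using e by simp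
        qed
      qed
    qed
  qed
  with MB show ?thesis by blast
qed

end
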